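(* Let $\mathfrak{m}_{\mathbb{B}}=\left\{\begin{pmatrix}0&\overline{q}\\ q&0\end{pmatrix}:q\in\mathbb{H}\right\}$. The map $\pi:\mathrm{Sp}(1)\times\mathfrak{m}_{\mathbb{B}}\times\mathrm{Sp}(1)\to\mathrm{Sp}(1,1)$ given by \[ \pi(u,X,v)=\operatorname{diag}(u,1)\,\exp(X)\,v \] is a diffeomorphism.
   Context: $\mathbb{H}$ denotes the quaternions and $\mathrm{Sp}(1)=\{u\in\mathbb{H}:|u|=1\}$. Let $I_{1,1}=\operatorname{diag}(1,-1)$ and $\mathrm{Sp}(1,1)=\{A\in M_2(\mathbb{H}):A^*I_{1,1}A=I_{1,1}\}$, where $A^*$ is the conjugate transpose. Here $\exp$ is the matrix exponential $\exp(X)=\sum_{k\ge0}X^k/k!$ (which is the Lie group exponential of $\mathrm{Sp}(1,1)$), and in $\pi(u,X,v)$ the element $v\in\mathrm{Sp}(1)$ multiplies the matrix on the right as the scalar matrix $vI_2$. *)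

theory Defs
  imports "HOL-Analysis.Analysis"
begin

text \<open>A quaternion a + b i + c j + d k is represented by (a,b,c,d); the product type
  carries the Euclidean structure of R^4, so norm is the quaternion modulus.\<close>

type_synonym quat = "real \<times> real \<times> real \<times> real"

definition qone :: quat where "qone = (1, 0, 0, 0)"

fun qmul :: "quat \<Rightarrow> quat \<Rightarrow> quat" where
  "qmul (a1, b1, c1, d1) (a2, b2, c2, d2) =
     (a1*a2 - b1*b2 - c1*c2 - d1*d2,
      a1*b2 + b1*a2 + c1*d2 - d1*c2,
      a1*c2 - b1*d2 + c1*a2 + d1*b2,
      a1*d2 + b1*c2 - c1*b2 + d1*a2)"

fun qcnj :: "quat \<Rightarrow> quat" where
  "qcnj (a, b, c, d) = (a, -b, -c, -d)"

definition Sp1 :: "quat set" where "Sp1 = {u. norm u = 1}"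

text \<open>(a, b, c, d) represents the matrix [[a, b], [c, d]].\<close>

type_synonym hmat = "quat \<times> quat \<times> quat \<times> quat"

fun hmul :: "hmat \<Rightarrow> hmat \<Rightarrow> hmat" where
  "hmul (a, b, c, d) (e, f, g, h) =
     (qmul a e + qmul b g, qmul a f + qmul b h, qmul c e + qmul d g, qmul c f + qmul d h)"

fun hadj :: "hmat \<Rightarrow> hmat" where
  "hadj (a, b, c, d) = (qcnj a, qcnj c, qcnj b, qcnj d)"

definition hid :: hmat where "hid = (qone, 0, 0, qone)"

definition I11 :: hmat where "I11 = (qone, 0, 0, - qone)"

definition Sp11 :: "hmat set" where "Sp11 = {A. hmul (hadj A) (hmul I11 A) = I11}"

fun hpow :: "hmat \<Rightarrow> nat \<Rightarrow> hmat" where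
  "hpow X 0 = hid"
| "hpow X (Suc k) = hmul X (hpow X k)"

definition hexp :: "hmat \<Rightarrow> hmat" where
  "hexp X = (\<Sum>k. (1 / fact k) *\<^sub>R hpow X k)"

definition mB :: "hmat set" where "mB = {(0, qcnj q, q, 0) | q. True}"

definition hdiag :: "quat \<Rightarrow> quat \<Rightarrow> hmat" where "hdiag u w = (u, 0, 0, w)"

definition piB :: "quat \<times> hmat \<times> quat \<Rightarrow> hmat" where
  "piB = (\<lambda>(u, X, v). hmul (hmul (hdiag u qone) (hexp X)) (hdiag v v))"

fun Ck :: "nat \<Rightarrow> 'a set \<Rightarrow> ('a::real_normed_vector \<Rightarrow> 'b::real_normed_vector) \<Rightarrow> bool" where
  "Ck 0 U f = continuous_on U f"
| "Ck (Suc k) U f = ((\<forall>x\<in>U. f differentiable (at x)) \<and>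
                     (\<forall>v. Ck k U (\<lambda>x. frechet_derivative f (at x) v)))"

definition smooth_on :: "'a::real_normed_vector set \<Rightarrow> ('a \<Rightarrow> 'b::real_normed_vector) \<Rightarrow> bool" where
  "smooth_on U f \<longleftrightarrow> open U \<and> (\<forall>k. Ck k U f)"

definition smooth_map_on :: "'a::euclidean_space set \<Rightarrow> ('a \<Rightarrow> 'b::euclidean_space) \<Rightarrow> bool" where
  "smooth_map_on S f \<longleftrightarrow>
     (\<forall>x\<in>S. \<exists>U g. open U \<and> x \<in> U \<and> smooth_on U g \<and> (\<forall>y\<in>S \<inter> U. g y = f y))"

definition diffeomorphism_betw :: "('a::euclidean_space \<Rightarrow> 'b::euclidean_space) \<Rightarrow> 'a set \<Rightarrow> 'b set \<Rightarrow> bool" where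
  "diffeomorphism_betw f S T \<longleftrightarrow>
     bij_betw f S T \<and> smooth_map_on S f \<and> smooth_map_on T (inv_into S f)"

end

theory Submission
  imports Defs
begin


lemma Ck_cong:
  assumes "open U" "\<And>x. x \<in> U \<Longrightarrow> f x = g x" "Ck k U f"
  shows "Ck k U g"
  using assms
proof (induction k arbitrary: f g)
  case 0
  then show ?case using continuous_on_cong by fastforce
next
  case (Suc k)
  have D: "\<And>x. x \<in> U \<Longrightarrow> (g has_derivative frechet_derivative f (at x)) (at x)"
    using Suc.prems by (auto intro!: has_derivative_transform_within_open[of f _ x UNIV U g for x]
      simp: frechet_derivative_works[symmetric])
  have E: "\<And>x. x \<in> U \<Longrightarrow> frechet_derivative g (at x) = frechet_derivative f (at x)"
    using D frechet_derivative_at by metis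
  show ?case using Suc.prems D E Suc.IH[of "\<lambda>x. frechet_derivative f (at x) v" "\<lambda>x. frechet_derivative g (at x) v" for v]
    by (auto simp: differentiable_def)
qed

lemma Ck_subset:
  assumes "Ck k U f" "V \<subseteq> U"
  shows "Ck k V f"
  using assms by (induction k arbitrary: f) (auto intro: continuous_on_subset)

lemma Ck_Suc_imp: "Ck (Suc k) U f \<Longrightarrow> Ck k U f"
proof (induction k arbitrary: f)
  case 0
  then show ?case by (auto intro!: continuous_at_imp_continuous_on differentiable_imp_continuous_within)
next
  case (Suc k)
  then show ?case by auto
qed

lemma Ck_le: "m \<le> k \<Longrightarrow> Ck k U f \<Longrightarrow> Ck m U f"
proof (induction k)
  case 0 then show ?case by simp
next
  case (Suc k) then show ?case using Ck_Suc_imp le_Suc_eq by metis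
qed


lemma Ck_SucI:
  assumes "open U" "\<And>x. x \<in> U \<Longrightarrow> (f has_derivative f' x) (at x)"
    "\<And>v. Ck k U (\<lambda>x. f' x v)"
  shows "Ck (Suc k) U f"
proof -
  have E: "\<And>x. x \<in> U \<Longrightarrow> frechet_derivative f (at x) = f' x"
    using assms(2) frechet_derivative_at by metis
  show ?thesis using assms E Ck_cong[OF assms(1), of "\<lambda>x. f' x v" "\<lambda>x. frechet_derivative f (at x) v" for v]
    by (auto simp: differentiable_def)
qed

lemma Ck_SucD:
  assumes "Ck (Suc k) U f" "\<And>x. x \<in> U \<Longrightarrow> (f has_derivative f' x) (at x)" "open U"
  shows "Ck k U (\<lambda>x. f' x v)"
proof -
  have E: "\<And>x. x \<in> U \<Longrightarrow> frechet_derivative f (at x) = f' x"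
    using assms(2) frechet_derivative_at by metis
  show ?thesis using assms E Ck_cong[OF assms(3), of "\<lambda>x. frechet_derivative f (at x) v" "\<lambda>x. f' x v"]
    by auto
qed

lemma Ck_SucD_diff:
  assumes "Ck (Suc k) U f" "x \<in> U"
  shows "(f has_derivative frechet_derivative f (at x)) (at x)"
  using assms frechet_derivative_works by auto

lemma Ck_const: "open U \<Longrightarrow> Ck k U (\<lambda>x. c)"
proof (induction k arbitrary: c)
  case 0 then show ?case by simp
next
  case (Suc k)
  show ?case by (rule Ck_SucI[where f'="\<lambda>x v. 0"]) (use Suc in auto)
qed

lemma Ck_linear:
  assumes "open U" "bounded_linear L" "Ck k U f"
  shows "Ck k U (\<lambda>x. L (f x))"
  using assms(3)
proof (induction k arbitrary: f)
  case 0
  have "continuous_on UNIV L" using assms(2) linear_continuous_on by blast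
  then show ?case using 0 continuous_on_compose2[of UNIV L U f] by auto
next
  case (Suc k)
  show ?case
  proof (rule Ck_SucI[where f'="\<lambda>x v. L (frechet_derivative f (at x) v)"])
    show "\<And>x. x \<in> U \<Longrightarrow> ((\<lambda>x. L (f x)) has_derivative (\<lambda>v. L (frechet_derivative f (at x) v))) (at x)"
      using Ck_SucD_diff[OF Suc.prems] bounded_linear.has_derivative[OF assms(2)] by blast
    show "Ck k U (\<lambda>x. L (frechet_derivative f (at x) v))" for v
      using Suc.prems by (intro Suc.IH) simp
  qed (fact assms)
qed

lemma Ck_add:
  assumes "open U" "Ck k U f" "Ck k U g"
  shows "Ck k U (\<lambda>x. f x + g x)"
  using assms(2,3)
proof (induction k arbitrary: f g)
  case 0 then show ?case by (auto intro: continuous_on_add)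
next
  case (Suc k)
  show ?case
  proof (rule Ck_SucI[where f'="\<lambda>x v. frechet_derivative f (at x) v + frechet_derivative g (at x) v"])
    show "\<And>x. x \<in> U \<Longrightarrow> ((\<lambda>x. f x + g x) has_derivative (\<lambda>v. frechet_derivative f (at x) v + frechet_derivative g (at x) v)) (at x)"
      using Ck_SucD_diff[OF Suc.prems(1)] Ck_SucD_diff[OF Suc.prems(2)] has_derivative_add by blast
    show "Ck k U (\<lambda>x. frechet_derivative f (at x) v + frechet_derivative g (at x) v)" for v
      using Suc.prems by (intro Suc.IH) simp_all
  qed (fact assms)
qed

lemma Ck_sum:
  assumes "open U" "finite I" "\<And>i. i \<in> I \<Longrightarrow> Ck k U (f i)"
  shows "Ck k U (\<lambda>x. \<Sum>i\<in>I. f i x)"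
  using assms(2,3)
proof (induction I rule: finite_induct)
  case empty then show ?case using Ck_const[OF assms(1)] by simp
next
  case (insert i I) then show ?case using Ck_add[OF assms(1), of k "f i" "\<lambda>x. \<Sum>i\<in>I. f i x"] by simp
qed

lemma Ck_bilinear:
  assumes "open U" "bounded_bilinear bl" "Ck k U f" "Ck k U g"
  shows "Ck k U (\<lambda>x. bl (f x) (g x))"
  using assms(3,4)
proof (induction k arbitrary: f g)
  case 0
  then show ?case using bounded_bilinear.continuous_on[OF assms(2), of U f g] by simp
next
  case (Suc k)
  show ?case
  proof (rule Ck_SucI[where f'="\<lambda>x v. bl (f x) (frechet_derivative g (at x) v) + bl (frechet_derivative f (at x) v) (g x)"])
    show "\<And>x. x \<in> U \<Longrightarrow> ((\<lambda>x. bl (f x) (g x)) has_derivative (\<lambda>v. bl (f x) (frechet_derivative g (at x) v) + bl (frechet_derivative f (at x) v) (g x))) (at x)"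
      using Ck_SucD_diff[OF Suc.prems(1)] Ck_SucD_diff[OF Suc.prems(2)] bounded_bilinear.FDERIV[OF assms(2)] by blast
    show "Ck k U (\<lambda>x. bl (f x) (frechet_derivative g (at x) v) + bl (frechet_derivative f (at x) v) (g x))" for v
    proof -
      have f: "Ck k U f" and g: "Ck k U g" using Suc.prems Ck_Suc_imp by blast+
      have df: "Ck k U (\<lambda>x. frechet_derivative f (at x) v)" and dg: "Ck k U (\<lambda>x. frechet_derivative g (at x) v)"
        using Suc.prems by simp_all
      show ?thesis using Suc.IH[OF f dg] Suc.IH[OF df g] by (rule Ck_add[OF assms(1)])
    qed
  qed (fact assms)
qed

lemma Ck_Pair:
  assumes "open U" "Ck k U f" "Ck k U g"
  shows "Ck k U (\<lambda>x. (f x, g x))"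
  using assms(2,3)
proof (induction k arbitrary: f g)
  case 0
  then show ?case using continuous_on_Pair[of U f g] by simp
next
  case (Suc k)
  show ?case
  proof (rule Ck_SucI[where f'="\<lambda>x v. (frechet_derivative f (at x) v, frechet_derivative g (at x) v)"])
    show "\<And>x. x \<in> U \<Longrightarrow> ((\<lambda>x. (f x, g x)) has_derivative (\<lambda>v. (frechet_derivative f (at x) v, frechet_derivative g (at x) v))) (at x)"
      using Ck_SucD_diff[OF Suc.prems(1)] Ck_SucD_diff[OF Suc.prems(2)] has_derivative_Pair by blast
    show "Ck k U (\<lambda>x. (frechet_derivative f (at x) v, frechet_derivative g (at x) v))" for v
      using Suc.prems by (intro Suc.IH) simp_all
  qed (fact assms)
qed

lemma Ck_id: "open U \<Longrightarrow> Ck k U (\<lambda>x. x)"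
proof (induction k)
  case 0 then show ?case by simp
next
  case (Suc k)
  show ?case by (rule Ck_SucI[where f'="\<lambda>x v. v"]) (use Suc Ck_const in simp_all)
qed

definition smooth :: "'a::real_normed_vector set \<Rightarrow> ('a \<Rightarrow> 'b::real_normed_vector) \<Rightarrow> bool"
  where "smooth U f \<longleftrightarrow> (\<forall>k. Ck k U f)"

lemma lin_expand:
  fixes f :: "'a::euclidean_space \<Rightarrow> 'b::real_normed_vector"
  assumes "linear f"
  shows "f x = (\<Sum>i\<in>Basis. (x \<bullet> i) *\<^sub>R f i)"
proof -
  interpret linear f by fact
  have "f x = f (\<Sum>b\<in>Basis. (x \<bullet> b) *\<^sub>R b)"
    unfolding euclidean_representation ..
  also have "\<dots> = (\<Sum>i\<in>Basis. (x \<bullet> i) *\<^sub>R f i)"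
    by (simp add: sum scale)
  finally show ?thesis .
qed

lemma Ck_compose:
  fixes f :: "'a::euclidean_space \<Rightarrow> 'b::euclidean_space" and g :: "'b \<Rightarrow> 'c::euclidean_space"
  assumes "open U" "open V" "f ` U \<subseteq> V" "Ck k U f" "smooth V g"
  shows "Ck k U (\<lambda>x. g (f x))"
  using assms(3,4,5)
proof (induction k arbitrary: g f)
  case 0
  have "Ck 0 V g" using 0(3) unfolding smooth_def by blast
  then have "continuous_on V g" by simp
  then show ?case using 0(1) 0(2) continuous_on_compose2[of V g U f] by (metis Ck.simps(1))
next
  case (Suc k)
  have sg: "\<And>m. Ck m V g" using Suc.prems(3) unfolding smooth_def by blast
  have gd: "\<And>y. y \<in> V \<Longrightarrow> (g has_derivative frechet_derivative g (at y)) (at y)"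
    using Ck_SucD_diff[OF sg[of "Suc 0"]] by blast
  have lin: "\<And>y. y \<in> V \<Longrightarrow> linear (frechet_derivative g (at y))"
    by (rule has_derivative_linear[OF gd])
  define D where "D = (\<lambda>x v. \<Sum>i\<in>Basis. (frechet_derivative f (at x) v \<bullet> i) *\<^sub>R frechet_derivative g (at (f x)) i)"
  have DD: "frechet_derivative g (at (f x)) (frechet_derivative f (at x) v) = D x v" if "x \<in> U" for x v
  proof -
    have "linear (frechet_derivative g (at (f x)))" by (rule lin) (use that Suc.prems(1) in blast)
    then show ?thesis unfolding D_def by (rule lin_expand)
  qed
  show ?case
  proof (rule Ck_SucI[where f'="D"])
    show "((\<lambda>x. g (f x)) has_derivative D x) (at x)" if "x \<in> U" for x
    proof -
      have "((\<lambda>x. g (f x)) has_derivative (\<lambda>v. frechet_derivative g (at (f x)) (frechet_derivative f (at x) v))) (at x)"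
        using diff_chain_at[OF Ck_SucD_diff[OF Suc.prems(2) that] gd[of "f x"]] that Suc.prems(1)
        by (simp add: o_def image_subset_iff)
      moreover have "(\<lambda>v. frechet_derivative g (at (f x)) (frechet_derivative f (at x) v)) = D x"
        by (rule ext, rule DD[OF that])
      ultimately show ?thesis by simp
    qed
    show "Ck k U (\<lambda>x. D x v)" for v
      unfolding D_def
    proof (rule Ck_sum[OF assms(1) finite_Basis])
      fix i :: 'b assume i: "i \<in> Basis"
      show "Ck k U (\<lambda>x. (frechet_derivative f (at x) v \<bullet> i) *\<^sub>R frechet_derivative g (at (f x)) i)"
      proof (rule Ck_bilinear[OF assms(1) bounded_bilinear_scaleR])
      show "Ck k U (\<lambda>x. frechet_derivative f (at x) v \<bullet> i)"
        using Ck_linear[OF assms(1) bounded_linear_inner_left, of k "\<lambda>x. frechet_derivative f (at x) v" i] Suc.prems(2) by simp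
      have "smooth V (\<lambda>y. frechet_derivative g (at y) i)"
        unfolding smooth_def
      proof
        fix m show "Ck m V (\<lambda>y. frechet_derivative g (at y) i)"
          using sg[of "Suc m"] by simp
      qed
      then show "Ck k U (\<lambda>x. frechet_derivative g (at (f x)) i)"
        using Suc.IH[of f "\<lambda>y. frechet_derivative g (at y) i"] Suc.prems(1) Ck_Suc_imp[OF Suc.prems(2)] by blast
    qed
    qed
  qed (fact assms)
qed


lemma smooth_Ck: "smooth U f \<Longrightarrow> Ck k U f" unfolding smooth_def by blast

lemma smooth_cont: "smooth U f \<Longrightarrow> continuous_on U f"
  using smooth_Ck[of U f 0] by simp

lemma smooth_compose:
  fixes f :: "'a::euclidean_space \<Rightarrow> 'b::euclidean_space" and g :: "'b \<Rightarrow> 'c::euclidean_space"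
  assumes "open U" "open V" "f ` U \<subseteq> V" "smooth U f" "smooth V g"
  shows "smooth U (\<lambda>x. g (f x))"
  unfolding smooth_def using Ck_compose[OF assms(1,2,3) _ assms(5)] assms(4) smooth_Ck by blast

lemma smooth_const: "open U \<Longrightarrow> smooth U (\<lambda>x. c)"
  unfolding smooth_def using Ck_const by blast

lemma smooth_id: "open U \<Longrightarrow> smooth U (\<lambda>x. x)"
  unfolding smooth_def using Ck_id by blast

lemma smooth_linear: "open U \<Longrightarrow> bounded_linear L \<Longrightarrow> smooth U f \<Longrightarrow> smooth U (\<lambda>x. L (f x))"
  unfolding smooth_def using Ck_linear by blast

lemma smooth_add: "open U \<Longrightarrow> smooth U f \<Longrightarrow> smooth U g \<Longrightarrow> smooth U (\<lambda>x. f x + g x)"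
  unfolding smooth_def using Ck_add by blast

lemma smooth_bilinear: "open U \<Longrightarrow> bounded_bilinear bl \<Longrightarrow> smooth U f \<Longrightarrow> smooth U g \<Longrightarrow> smooth U (\<lambda>x. bl (f x) (g x))"
  unfolding smooth_def using Ck_bilinear by blast

lemma smooth_Pair: "open U \<Longrightarrow> smooth U f \<Longrightarrow> smooth U g \<Longrightarrow> smooth U (\<lambda>x. (f x, g x))"
  unfolding smooth_def using Ck_Pair by blast

lemma smooth_subset: "smooth U f \<Longrightarrow> V \<subseteq> U \<Longrightarrow> smooth V f"
  unfolding smooth_def using Ck_subset by blast

lemma smooth_cong: "open U \<Longrightarrow> (\<And>x. x \<in> U \<Longrightarrow> f x = g x) \<Longrightarrow> smooth U f \<Longrightarrow> smooth U g"
  unfolding smooth_def using Ck_cong by blast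

lemma smooth_mult: "open U \<Longrightarrow> smooth U f \<Longrightarrow> smooth U g \<Longrightarrow> smooth U (\<lambda>x. f x * g x :: real)"
  using smooth_bilinear[OF _ bounded_bilinear_mult] by blast

lemma smooth_scaleR: "open U \<Longrightarrow> smooth U f \<Longrightarrow> smooth U g \<Longrightarrow> smooth U (\<lambda>x. f x *\<^sub>R g x)"
  using smooth_bilinear[OF _ bounded_bilinear_scaleR] by blast

lemma smooth_minus: "open U \<Longrightarrow> smooth U f \<Longrightarrow> smooth U (\<lambda>x. - f x)"
  using smooth_linear[OF _ bounded_linear_minus[OF bounded_linear_ident]] by blast

lemma smooth_diff: "open U \<Longrightarrow> smooth U f \<Longrightarrow> smooth U g \<Longrightarrow> smooth U (\<lambda>x. f x - g x)"
  using smooth_add[of U f "\<lambda>x. - g x"] smooth_minus[of U g] by simp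

lemma smooth_ode:
  fixes f G :: "real \<Rightarrow> real"
  assumes U: "open U" and V: "open V" and fUV: "f ` U \<subseteq> V" and G: "smooth V G"
    and der: "\<And>x. x \<in> U \<Longrightarrow> (f has_real_derivative G (f x)) (at x)"
  shows "smooth U f"
  unfolding smooth_def
proof
  fix k show "Ck k U f"
  proof (induction k)
    case 0
    have "\<And>x. x \<in> U \<Longrightarrow> isCont f x" using der DERIV_isCont by blast
    then show ?case by (simp add: continuous_at_imp_continuous_on)
  next
    case (Suc k)
    show ?case
    proof (rule Ck_SucI[where f'="\<lambda>x h. G (f x) * h"])
      show "(f has_derivative (\<lambda>h. G (f x) * h)) (at x)" if "x \<in> U" for x
        using der[OF that] by (simp add: has_field_derivative_def)
      show "Ck k U (\<lambda>x. G (f x) * v)" for v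
        using Ck_linear[OF U bounded_linear_mult_left[of v], OF Ck_compose[OF U V fUV Suc G]] .
    qed (fact U)
  qed
qed

lemma smooth_powser:
  fixes c :: "nat \<Rightarrow> real"
  assumes "\<And>y. summable (\<lambda>n. c n * y^n)"
  shows "smooth UNIV (\<lambda>y. \<Sum>n. c n * y^n)"
  unfolding smooth_def
proof
  fix k show "Ck k UNIV (\<lambda>y. \<Sum>n. c n * y^n)"
    using assms
  proof (induction k arbitrary: c)
    case 0
    have "\<And>x. isCont (\<lambda>y. \<Sum>n. c n * y^n) x"
      using termdiffs_strong_converges_everywhere[OF 0] DERIV_isCont by blast
    then show ?case by (simp add: continuous_at_imp_continuous_on)
  next
    case (Suc k)
    show ?case
    proof (rule Ck_SucI[where f'="\<lambda>x h. (\<Sum>n. diffs c n * x^n) * h"])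
      show "((\<lambda>y. \<Sum>n. c n * y^n) has_derivative (\<lambda>h. (\<Sum>n. diffs c n * x^n) * h)) (at x)" for x
        using termdiffs_strong_converges_everywhere[OF Suc.prems] by (simp add: has_field_derivative_def)
      show "Ck k UNIV (\<lambda>x. (\<Sum>n. diffs c n * x^n) * v)" for v
        using Ck_linear[OF open_UNIV bounded_linear_mult_left[of v], OF Suc.IH[of "diffs c"]]
          termdiff_converges_all[OF Suc.prems] by blast
    qed simp
  qed
qed

lemma smooth_inverse: "smooth {t::real. 0 < t} inverse"
proof (rule smooth_ode[where V=UNIV and G="\<lambda>s. - (s * s)"])
  show "open {t::real. 0 < t}" by (simp add: open_Collect_less)
  show "smooth UNIV (\<lambda>s::real. - (s * s))"
    by (intro smooth_minus smooth_mult smooth_id) simp_all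
  show "(inverse has_real_derivative - (inverse x * inverse x)) (at x)" if "x \<in> {t. 0 < t}" for x
    using DERIV_inverse[of x UNIV] that by (simp add: power2_eq_square)
qed simp_all

definition rs :: "real \<Rightarrow> real" where "rs t = inverse (sqrt t)"

lemma smooth_rs: "smooth {t::real. 0 < t} rs"
proof (rule smooth_ode[where V=UNIV and G="\<lambda>s. (-1/2) * (s * s * s)"])
  show "open {t::real. 0 < t}" by (simp add: open_Collect_less)
  show "smooth UNIV (\<lambda>s::real. (-1/2) * (s * s * s))"
    by (intro smooth_mult smooth_id smooth_const) simp_all
  show "(rs has_real_derivative (-1/2) * (rs x * rs x * rs x)) (at x)" if "x \<in> {t. 0 < t}" for x
  proof -
    have x: "0 < x" using that by simp
    have ex: "\<And>a::real. - (a * (a / 2) * a) = (-1/2) * (a * a * a)" by (simp add: algebra_simps)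
    have d: "((\<lambda>t. inverse (sqrt t)) has_real_derivative - (inverse (sqrt x) * (inverse (sqrt x) / 2) * inverse (sqrt x))) (at x)"
      by (rule DERIV_inverse'[OF DERIV_real_sqrt[OF x]]) (use x in simp)
    have e: "- (inverse (sqrt x) * (inverse (sqrt x) / 2) * inverse (sqrt x)) = (-1/2) * (inverse (sqrt x) * inverse (sqrt x) * inverse (sqrt x))"
      using ex by blast
    show ?thesis unfolding rs_def using DERIV_cong[OF d e] .
  qed
qed simp_all



definition cC :: "nat \<Rightarrow> real" where "cC n = inverse (fact (2*n))"
definition cS :: "nat \<Rightarrow> real" where "cS n = inverse (fact (2*n+1))"
definition Cf :: "real \<Rightarrow> real" where "Cf y = (\<Sum>n. cC n * y^n)"
definition Sf :: "real \<Rightarrow> real" where "Sf y = (\<Sum>n. cS n * y^n)"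
definition S1 :: "real \<Rightarrow> real" where "S1 y = (\<Sum>n. diffs cS n * y^n)"

lemma summable_cC: "summable (\<lambda>n. cC n * y^n)"
proof (rule summable_comparison_test'[OF summable_exp[of "\<bar>y\<bar>"], of 0])
  fix n :: nat
  have "inverse (fact (2*n)) \<le> (inverse (fact n) :: real)"
    by (rule le_imp_inverse_le) (auto intro: fact_mono)
  then show "norm (cC n * y^n) \<le> inverse (fact n) * \<bar>y\<bar>^n"
    unfolding cC_def by (simp add: abs_mult power_abs mult_right_mono)
qed

lemma summable_cS: "summable (\<lambda>n. cS n * y^n)"
proof (rule summable_comparison_test'[OF summable_exp[of "\<bar>y\<bar>"], of 0])
  fix n :: nat
  have "inverse (fact (2*n+1)) \<le> (inverse (fact n) :: real)"
    by (rule le_imp_inverse_le[OF fact_mono[of n "2*n+1"]]) simp_all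
  then show "norm (cS n * y^n) \<le> inverse (fact n) * \<bar>y\<bar>^n"
    unfolding cS_def by (simp add: abs_mult power_abs mult_right_mono)
qed

lemma summable_dS: "summable (\<lambda>n. diffs cS n * y^n)"
  using termdiff_converges_all[OF summable_cS] .

lemma smooth_Cf: "smooth UNIV Cf"
  unfolding Cf_def[abs_def] using smooth_powser[OF summable_cC] .
lemma smooth_Sf: "smooth UNIV Sf"
  unfolding Sf_def[abs_def] using smooth_powser[OF summable_cS] .
lemma smooth_S1: "smooth UNIV S1"
  unfolding S1_def[abs_def] using smooth_powser[OF summable_dS] .

lemma DERIV_Sf: "(Sf has_real_derivative S1 y) (at y)"
  unfolding Sf_def[abs_def] S1_def using termdiffs_strong_converges_everywhere[OF summable_cS] .

lemma Sf_0: "Sf 0 = 1" unfolding Sf_def by (simp add: cS_def)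

lemma Sf_ge1: assumes "0 \<le> y" shows "1 \<le> Sf y"
proof -
  have "sum (\<lambda>n. cS n * y^n) {0} \<le> Sf y"
    unfolding Sf_def by (rule sum_le_suminf[OF summable_cS]) (use assms in \<open>auto simp: cS_def\<close>)
  then show ?thesis by (simp add: cS_def)
qed

lemma Cf_ge1: assumes "0 \<le> y" shows "1 \<le> Cf y"
proof -
  have "sum (\<lambda>n. cC n * y^n) {0} \<le> Cf y"
    unfolding Cf_def by (rule sum_le_suminf[OF summable_cC]) (use assms in \<open>auto simp: cC_def\<close>)
  then show ?thesis by (simp add: cC_def)
qed

lemma S1_nonneg: assumes "0 \<le> y" shows "0 \<le> S1 y"
  unfolding S1_def by (rule suminf_nonneg[OF summable_dS]) (use assms in \<open>auto simp: diffs_def cS_def\<close>)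

lemma Cf_cosh: "Cf (r^2) = cosh r"
proof -
  have s: "(\<lambda>n. cC n * (r^2)^n) sums Cf (r^2)"
    unfolding Cf_def by (rule summable_sums[OF summable_cC])
  have "(\<lambda>n. if even n then cC (n div 2) * (r^2)^(n div 2) else 0) sums (0 + Cf (r^2))"
    using sums_if[OF sums_zero s] by simp
  moreover have "(\<lambda>n. if even n then cC (n div 2) * (r^2)^(n div 2) else 0) =
     (\<lambda>n. if even n then r ^ n /\<^sub>R fact n else 0)"
  proof
    fix n :: nat
    show "(if even n then cC (n div 2) * (r^2)^(n div 2) else 0) = (if even n then r ^ n /\<^sub>R fact n else 0)"
    proof (cases "even n")
      case True
      then obtain m where n: "n = 2*m" by (rule evenE)
      show ?thesis unfolding n by (simp add: cC_def power_mult[symmetric] divide_inverse mult.commute)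
    qed simp
  qed
  ultimately show ?thesis using cosh_converges[of r] sums_unique2 by fastforce
qed

lemma Sf_sinh: "r * Sf (r^2) = sinh r"
proof -
  have s: "(\<lambda>n. r * (cS n * (r^2)^n)) sums (r * Sf (r^2))"
    unfolding Sf_def by (rule sums_mult[OF summable_sums[OF summable_cS]])
  have "(\<lambda>n. if even n then 0 else r * (cS ((n - 1) div 2) * (r^2)^((n - 1) div 2))) sums (r * Sf (r^2))"
    using sums_if'[OF s] by simp
  moreover have "(\<lambda>n. if even n then 0 else r * (cS ((n - 1) div 2) * (r^2)^((n - 1) div 2))) =
     (\<lambda>n. if even n then 0 else r ^ n /\<^sub>R fact n)"
  proof
    fix n :: nat
    show "(if even n then 0 else r * (cS ((n - 1) div 2) * (r^2)^((n - 1) div 2))) = (if even n then 0 else r ^ n /\<^sub>R fact n)"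
    proof (cases "even n")
      case False
      then obtain m where n: "n = 2*m+1" by (rule oddE)
      show ?thesis unfolding n by (simp add: cS_def power_mult[symmetric] divide_inverse mult_ac)
    qed simp
  qed
  ultimately show ?thesis using sinh_converges[of r] sums_unique2 by fastforce
qed

lemma Cf_Sf_id: assumes "0 \<le> y" shows "Cf y ^ 2 = 1 + y * (Sf y * Sf y)"
proof -
  define r where "r = sqrt y"
  have y: "y = r^2" unfolding r_def using assms by simp
  have "Cf y ^ 2 = sinh r ^ 2 + 1" unfolding y Cf_cosh by (rule cosh_square_eq)
  also have "sinh r = r * Sf y" unfolding y Sf_sinh ..
  finally show ?thesis unfolding y by (simp add: algebra_simps power2_eq_square)
qed

definition Phi :: "real \<Rightarrow> real" where "Phi y = y * (Sf y * Sf y)"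
definition dPhi :: "real \<Rightarrow> real" where "dPhi y = Sf y * Sf y + 2 * y * Sf y * S1 y"

lemma DERIV_Phi: "(Phi has_real_derivative dPhi y) (at y)"
proof -
  have "((\<lambda>y. y * (Sf y * Sf y)) has_real_derivative 1 * (Sf y * Sf y) + (S1 y * Sf y + S1 y * Sf y) * y) (at y)"
    by (intro DERIV_mult DERIV_ident DERIV_Sf)
  moreover have "1 * (Sf y * Sf y) + (S1 y * Sf y + S1 y * Sf y) * y = dPhi y"
    unfolding dPhi_def by (simp add: algebra_simps)
  ultimately show ?thesis unfolding Phi_def[abs_def] by simp
qed

lemma smooth_dPhi: "smooth UNIV dPhi"
  unfolding dPhi_def[abs_def]
  by (intro smooth_add smooth_mult smooth_Sf smooth_S1 smooth_id smooth_const open_UNIV)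

lemma smooth_Phi: "smooth UNIV Phi"
  unfolding Phi_def[abs_def]
  by (intro smooth_mult smooth_Sf smooth_id open_UNIV)

lemma Phi_0: "Phi 0 = 0" unfolding Phi_def by simp

lemma Phi_ge: "0 \<le> y \<Longrightarrow> y \<le> Phi y"
  unfolding Phi_def using Sf_ge1[of y]
  by (metis mult.right_neutral mult_left_mono one_le_mult_iff order_trans zero_le_one)

lemma Phi_Sf_sq: "Phi y = y * Sf y ^ 2" unfolding Phi_def by (simp add: power2_eq_square)



lemma dPhi_pos_nonneg: "0 \<le> y \<Longrightarrow> 0 < dPhi y"
proof -
  assume y: "0 \<le> y"
  have "1 \<le> Sf y" using Sf_ge1[OF y] .
  moreover have "0 \<le> 2 * y * Sf y * S1 y" using y S1_nonneg[OF y] \<open>1 \<le> Sf y\<close> by simp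
  ultimately show ?thesis unfolding dPhi_def
    by (metis add_pos_nonneg less_le_trans mult_pos_pos zero_less_one)
qed

lemma eps_exists: "\<exists>e>0. \<forall>y. -e < y \<longrightarrow> 0 < Sf y \<and> 0 < dPhi y"
proof -
  have "open {y. 0 < Sf y}" using smooth_cont[OF smooth_Sf] by (intro open_Collect_less) (simp_all add: continuous_on_const)
  moreover have "open {y. 0 < dPhi y}" using smooth_cont[OF smooth_dPhi] by (intro open_Collect_less) (simp_all add: continuous_on_const)
  ultimately have o: "open ({y. 0 < Sf y} \<inter> {y. 0 < dPhi y})" by (rule open_Int)
  have "0 \<in> {y. 0 < Sf y} \<inter> {y. 0 < dPhi y}" by (simp add: Sf_0 dPhi_def)
  then obtain e where e: "e > 0" "\<And>y. dist y 0 < e \<Longrightarrow> y \<in> {y. 0 < Sf y} \<inter> {y. 0 < dPhi y}"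
    using o unfolding open_dist by blast
  show ?thesis
  proof (rule exI[of _ e], rule conjI[OF e(1)], intro allI impI)
    fix y :: real assume y: "- e < y"
    show "0 < Sf y \<and> 0 < dPhi y"
    proof (cases "0 \<le> y")
      case True then show ?thesis using Sf_ge1[OF True] dPhi_pos_nonneg[OF True] by simp
    next
      case False then have "dist y 0 < e" using y by (simp add: dist_real_def)
      then show ?thesis using e(2) by blast
    qed
  qed
qed

definition eps :: real where "eps = (SOME e. e > 0 \<and> (\<forall>y. -e < y \<longrightarrow> 0 < Sf y \<and> 0 < dPhi y))"

lemma eps_all: "eps > 0 \<and> (\<forall>y. -eps < y \<longrightarrow> 0 < Sf y \<and> 0 < dPhi y)"
proof -
  have "\<exists>e. e > 0 \<and> (\<forall>y. -e < y \<longrightarrow> 0 < Sf y \<and> 0 < dPhi y)" using eps_exists by blast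
  then show ?thesis unfolding eps_def by (rule someI_ex)
qed

lemma eps: "eps > 0" "\<And>y. -eps < y \<Longrightarrow> 0 < Sf y" "\<And>y. -eps < y \<Longrightarrow> 0 < dPhi y"
  using eps_all by blast+

lemma Phi_strict: assumes "-eps < a" "a < b" shows "Phi a < Phi b"
proof (rule DERIV_pos_imp_increasing[OF assms(2)])
  fix x assume "a \<le> x" "x \<le> b"
  then have "-eps < x" using assms by simp
  then show "\<exists>y. DERIV Phi x :> y \<and> 0 < y" using DERIV_Phi eps(3) by blast
qed

lemma Phi_inj: assumes "-eps < a" "-eps < b" "Phi a = Phi b" shows "a = b"
  using Phi_strict[of a b] Phi_strict[of b a] assms by (cases a b rule: linorder_cases) auto

definition Psi :: "real \<Rightarrow> real" where "Psi z = (THE y. -eps < y \<and> Phi y = z)"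
definition W :: "real set" where "W = {z. Phi (-eps/2) < z}"

lemma open_W: "open W" unfolding W_def by (simp add: open_Collect_less)

lemma Psi_Phi: assumes "-eps < y" shows "Psi (Phi y) = y"
  unfolding Psi_def by (rule the_equality) (use assms Phi_inj in auto)

lemma Phi_surj: assumes "z \<in> W" shows "\<exists>y. -eps/2 \<le> y \<and> Phi y = z"
proof -
  have a: "Phi (-eps/2) \<le> z" using assms unfolding W_def by simp
  have b: "z \<le> Phi \<bar>z\<bar>" using Phi_ge[of "\<bar>z\<bar>"] by simp
  have c: "-eps/2 \<le> \<bar>z\<bar>" using eps(1) by simp
  have "\<forall>x. -eps/2 \<le> x \<and> x \<le> \<bar>z\<bar> \<longrightarrow> isCont Phi x" using DERIV_Phi DERIV_isCont by blast
  then show ?thesis using IVT[OF a b c] by blast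
qed

lemma Psi_W: assumes "z \<in> W" shows "Phi (Psi z) = z" "-eps/2 \<le> Psi z" "-eps < Psi z"
proof -
  obtain y where y: "-eps/2 \<le> y" "Phi y = z" using Phi_surj[OF assms] by blast
  have y': "-eps < y" using y(1) eps(1) by simp
  have "Psi z = y" using Psi_Phi[OF y'] y(2) by simp
  then show "Phi (Psi z) = z" "-eps/2 \<le> Psi z" "-eps < Psi z" using y y' by auto
qed

lemma nonneg_W: "0 \<le> z \<Longrightarrow> z \<in> W"
  using Phi_strict[of "-eps/2" 0] eps(1) Phi_0 unfolding W_def by simp

lemma Psi_nonneg: assumes "0 \<le> z" shows "0 \<le> Psi z"
proof (rule ccontr)
  assume "\<not> 0 \<le> Psi z"
  then have "Phi (Psi z) < Phi 0" using Phi_strict[of "Psi z" 0] Psi_W(3)[OF nonneg_W[OF assms]] by simp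
  then show False using Psi_W(1)[OF nonneg_W[OF assms]] Phi_0 assms by simp
qed

lemma isCont_Psi: assumes "z \<in> W" shows "isCont Psi z"
proof -
  define x where "x = Psi z"
  have x: "-eps < x" unfolding x_def using Psi_W(3)[OF assms] .
  define d where "d = (x + eps) / 2"
  have d: "0 < d" unfolding d_def using x by simp
  have "isCont Psi (Phi x)"
  proof (rule isCont_inverse_function[where f=Phi and g=Psi and x=x, OF d])
    fix w assume wd: "\<bar>w - x\<bar> \<le> d"
    have ar0: "\<And>a b c::real. b - a \<le> (b + c) / 2 \<Longrightarrow> -c < b \<Longrightarrow> -c < a" by (simp add: field_simps)
    have ar: "\<And>a b c::real. \<bar>a - b\<bar> \<le> (b + c) / 2 \<Longrightarrow> -c < b \<Longrightarrow> -c < a"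
    proof -
      fix a b c :: real assume h: "\<bar>a - b\<bar> \<le> (b + c) / 2" "-c < b"
      have "b - a \<le> (b + c) / 2" using h(1) abs_ge_minus_self[of "a - b"] by linarith
      then show "-c < a" using ar0 h(2) by blast
    qed
    have "-eps < w" using ar wd x unfolding d_def by blast
    then show "Psi (Phi w) = w" by (rule Psi_Phi)
  next
    fix w show "isCont Phi w" using DERIV_Phi DERIV_isCont by blast
  qed
  then show ?thesis unfolding x_def Psi_W(1)[OF assms] .
qed

lemma DERIV_Psi: assumes "z \<in> W" shows "(Psi has_real_derivative inverse (dPhi (Psi z))) (at z)"
proof (rule DERIV_inverse_function[where f=Phi and a="Phi (-eps/2)" and b="z+1"])
  show "DERIV Phi (Psi z) :> dPhi (Psi z)" by (rule DERIV_Phi)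
  show "dPhi (Psi z) \<noteq> 0" using eps(3)[OF Psi_W(3)[OF assms]] by simp
  show "Phi (-eps/2) < z" using assms unfolding W_def by simp
  show "z < z + 1" by simp
  show "Phi (Psi y) = y" if "Phi (- eps / 2) < y" "y < z + 1" for y
    using Psi_W(1)[of y] that unfolding W_def by simp
  show "isCont Psi z" by (rule isCont_Psi[OF assms])
qed

lemma smooth_Psi: "smooth W Psi"
proof (rule smooth_ode[OF open_W _ _ _ DERIV_Psi])
  show "open {y. -eps < y}" by (simp add: open_Collect_less)
  show "Psi ` W \<subseteq> {y. -eps < y}" using Psi_W(3) by blast
  show "smooth {y. -eps < y} (\<lambda>y. inverse (dPhi y))"
  proof (rule smooth_compose[OF _ _ _ _ smooth_inverse])
    show "open {y. -eps < y}" by (simp add: open_Collect_less)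
    show "open {t::real. 0 < t}" by (simp add: open_Collect_less)
    show "dPhi ` {y. -eps < y} \<subseteq> {t. 0 < t}" using eps(3) by blast
    show "smooth {y. -eps < y} dPhi" using smooth_subset[OF smooth_dPhi] by blast
  qed
qed

definition Kf :: "real \<Rightarrow> real" where "Kf z = inverse (Sf (Psi z))"

lemma smooth_Kf: "smooth W Kf"
  unfolding Kf_def[abs_def]
proof (rule smooth_compose[OF open_W _ _ _ smooth_inverse])
  show "open {t::real. 0 < t}" by (simp add: open_Collect_less)
  show "(\<lambda>x. Sf (Psi x)) ` W \<subseteq> {t. 0 < t}" using eps(2) Psi_W(3) by blast
  show "smooth W (\<lambda>x. Sf (Psi x))"
    by (rule smooth_compose[OF open_W open_UNIV _ smooth_Psi smooth_Sf]) simp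
qed

lemma Kf_Phi: assumes "0 \<le> y" shows "Kf (Phi y) = inverse (Sf y)"
  unfolding Kf_def using Psi_Phi[of y] eps(1) assms by simp



fun nsq :: "quat \<Rightarrow> real" where "nsq (a, b, c, d) = a*a + b*b + c*c + d*d"

lemma norm_sq_quat: "norm p ^ 2 = nsq p"
  by (cases p rule: prod_cases4) (simp add: norm_Pair power2_eq_square)

lemma norm_quat: "norm p = sqrt (nsq p)"
  using norm_sq_quat[of p] by (metis norm_ge_zero real_sqrt_unique)

lemma nsq_nonneg: "0 \<le> nsq p"
  by (cases p rule: prod_cases4) simp

lemma nsq_eq_0: "nsq p = 0 \<longleftrightarrow> p = 0"
proof -
  have "nsq p = 0 \<longleftrightarrow> norm p ^ 2 = 0" using norm_sq_quat[of p] by simp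
  then show ?thesis by simp
qed

lemma qmul_assoc: "qmul (qmul p q) r = qmul p (qmul q r)"
  by (cases p rule: prod_cases4; cases q rule: prod_cases4; cases r rule: prod_cases4) (simp add: algebra_simps)

lemma qmul_qone_left[simp]: "qmul qone p = p"
  by (cases p rule: prod_cases4) (simp add: qone_def)
lemma qmul_qone_right[simp]: "qmul p qone = p"
  by (cases p rule: prod_cases4) (simp add: qone_def)
lemma qmul_zero_left[simp]: "qmul 0 p = 0"
  by (cases p rule: prod_cases4) (simp add: zero_prod_def)
lemma qmul_zero_right[simp]: "qmul p 0 = 0"
  by (cases p rule: prod_cases4) (simp add: zero_prod_def)
lemma qmul_add_left: "qmul (p + q) r = qmul p r + qmul q r"
  by (cases p rule: prod_cases4; cases q rule: prod_cases4; cases r rule: prod_cases4) (simp add: algebra_simps)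
lemma qmul_add_right: "qmul r (p + q) = qmul r p + qmul r q"
  by (cases p rule: prod_cases4; cases q rule: prod_cases4; cases r rule: prod_cases4) (simp add: algebra_simps)
lemma qmul_scaleR_left[simp]: "qmul (c *\<^sub>R p) q = c *\<^sub>R qmul p q"
  by (cases p rule: prod_cases4; cases q rule: prod_cases4) (simp add: algebra_simps)
lemma qmul_scaleR_right[simp]: "qmul p (c *\<^sub>R q) = c *\<^sub>R qmul p q"
  by (cases p rule: prod_cases4; cases q rule: prod_cases4) (simp add: algebra_simps)
lemma qmul_neg_left[simp]: "qmul (- p) q = - qmul p q"
  by (cases p rule: prod_cases4; cases q rule: prod_cases4) (simp add: algebra_simps)
lemma qmul_neg_right[simp]: "qmul p (- q) = - qmul p q"
  by (cases p rule: prod_cases4; cases q rule: prod_cases4) (simp add: algebra_simps)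

lemma qcnj_qmul: "qcnj (qmul p q) = qmul (qcnj q) (qcnj p)"
  by (cases p rule: prod_cases4; cases q rule: prod_cases4) (simp add: algebra_simps)
lemma qcnj_qcnj[simp]: "qcnj (qcnj p) = p"
  by (cases p rule: prod_cases4) simp
lemma qcnj_add: "qcnj (p + q) = qcnj p + qcnj q"
  by (cases p rule: prod_cases4; cases q rule: prod_cases4) simp
lemma qcnj_scaleR[simp]: "qcnj (c *\<^sub>R p) = c *\<^sub>R qcnj p"
  by (cases p rule: prod_cases4) simp
lemma qcnj_zero[simp]: "qcnj 0 = 0"
  by (simp add: zero_prod_def)
lemma qcnj_qone[simp]: "qcnj qone = qone"
  by (simp add: qone_def)
lemma qcnj_neg[simp]: "qcnj (- p) = - qcnj p"
  by (cases p rule: prod_cases4) simp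

lemma qmul_cnj_right: "qmul p (qcnj p) = nsq p *\<^sub>R qone"
  by (cases p rule: prod_cases4) (simp add: qone_def algebra_simps)
lemma qmul_cnj_left: "qmul (qcnj p) p = nsq p *\<^sub>R qone"
  by (cases p rule: prod_cases4) (simp add: qone_def algebra_simps)

lemma nsq_qmul: "nsq (qmul p q) = nsq p * nsq q"
  by (cases p rule: prod_cases4; cases q rule: prod_cases4) (simp add: algebra_simps)
lemma nsq_qcnj[simp]: "nsq (qcnj p) = nsq p"
  by (cases p rule: prod_cases4) simp
lemma nsq_scaleR: "nsq (c *\<^sub>R p) = c * c * nsq p"
  by (cases p rule: prod_cases4) (simp add: algebra_simps)
lemma nsq_qone[simp]: "nsq qone = 1"
  by (simp add: qone_def)

lemma norm_qmul: "norm (qmul p q) = norm p * norm q"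
  by (simp add: norm_quat nsq_qmul real_sqrt_mult)

lemma bounded_bilinear_qmul: "bounded_bilinear qmul"
proof
  show "qmul (a + a') b = qmul a b + qmul a' b" for a a' b by (rule qmul_add_left)
  show "qmul a (b + b') = qmul a b + qmul a b'" for a b b' by (rule qmul_add_right)
  show "qmul (r *\<^sub>R a) b = r *\<^sub>R qmul a b" for r a b by simp
  show "qmul a (r *\<^sub>R b) = r *\<^sub>R qmul a b" for r a b by simp
  show "\<exists>K. \<forall>a b. norm (qmul a b) \<le> norm a * norm b * K"
    by (rule exI[of _ 1]) (simp add: norm_qmul)
qed

lemma bounded_linear_qcnj: "bounded_linear qcnj"
proof
  show "qcnj (a + b) = qcnj a + qcnj b" for a b by (rule qcnj_add)
  show "qcnj (r *\<^sub>R a) = r *\<^sub>R qcnj a" for r a by simp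
  show "\<exists>K. \<forall>a. norm (qcnj a) \<le> norm a * K"
    by (rule exI[of _ 1]) (simp add: norm_quat)
qed



definition Xq :: "quat \<Rightarrow> hmat" where "Xq q = (0, qcnj q, q, 0)"

lemma mB_Xq: "X \<in> mB \<longleftrightarrow> (\<exists>q. X = Xq q)" unfolding mB_def Xq_def by blast

lemma hmul_Xq_Xq: "hmul (Xq q) (Xq q) = nsq q *\<^sub>R hid"
  by (simp add: Xq_def hid_def qmul_cnj_right qmul_cnj_left)

lemma hmul_Xq_hid: "hmul (Xq q) hid = Xq q"
  by (simp add: Xq_def hid_def)

lemma hmul_scaleR_right: "hmul A (c *\<^sub>R B) = c *\<^sub>R hmul A B"
  by (cases A rule: prod_cases4; cases B rule: prod_cases4) (simp add: scaleR_right_distrib)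

lemma hpow_Xq: "hpow (Xq q) n = (if even n then nsq q ^ (n div 2) *\<^sub>R hid else nsq q ^ (n div 2) *\<^sub>R Xq q)"
proof (induction n)
  case 0 then show ?case by simp
next
  case (Suc n)
  show ?case
  proof (cases "even n")
    case True
    then have "hpow (Xq q) (Suc n) = nsq q ^ (n div 2) *\<^sub>R Xq q"
      using Suc by (simp add: hmul_scaleR_right hmul_Xq_hid)
    then show ?thesis using True by simp
  next
    case False
    then have "hpow (Xq q) (Suc n) = nsq q ^ (n div 2) *\<^sub>R nsq q *\<^sub>R hid"
      using Suc by (simp add: hmul_scaleR_right hmul_Xq_Xq)
    moreover have "Suc n div 2 = Suc (n div 2)" using False by presburger
    ultimately show ?thesis using False by (simp add: mult.commute)
  qed
qed

lemma hexp_Xq: "hexp (Xq q) = Cf (nsq q) *\<^sub>R hid + Sf (nsq q) *\<^sub>R Xq q"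
proof -
  define y where "y = nsq q"
  define a where "a = (\<lambda>n. if even n then cC (n div 2) * y ^ (n div 2) else (0::real))"
  define b where "b = (\<lambda>n. if even n then (0::real) else cS ((n - 1) div 2) * y ^ ((n - 1) div 2))"
  have sa: "a sums Cf y"
    using sums_if[OF sums_zero summable_sums[OF summable_cC[of y]]] unfolding a_def Cf_def by simp
  have sb: "b sums Sf y"
    using sums_if'[OF summable_sums[OF summable_cS[of y]]] unfolding b_def Sf_def by simp
  have s: "(\<lambda>n. a n *\<^sub>R hid + b n *\<^sub>R Xq q) sums (Cf y *\<^sub>R hid + Sf y *\<^sub>R Xq q)"
    by (intro sums_add sums_scaleR_left sa sb)
  have t: "(1 / fact n) *\<^sub>R hpow (Xq q) n = a n *\<^sub>R hid + b n *\<^sub>R Xq q" for n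
  proof (cases "even n")
    case True
    then obtain m where n: "n = 2*m" by (rule evenE)
    show ?thesis unfolding hpow_Xq a_def b_def y_def n by (simp add: cC_def divide_inverse)
  next
    case False
    then obtain m where n: "n = 2*m+1" by (rule oddE)
    have "(2*m+1) div 2 = m" by presburger
    then show ?thesis unfolding hpow_Xq a_def b_def y_def n by (simp add: cS_def divide_inverse)
  qed
  show ?thesis unfolding hexp_def t using sums_unique[OF s] y_def by simp
qed

lemma piB_Xq: "piB (u, Xq q, v) =
  (Cf (nsq q) *\<^sub>R qmul u v, Sf (nsq q) *\<^sub>R qmul (qmul u (qcnj q)) v, Sf (nsq q) *\<^sub>R qmul q v, Cf (nsq q) *\<^sub>R v)"
proof -
  have "piB (u, Xq q, v) = hmul (hmul (hdiag u qone) (Cf (nsq q) *\<^sub>R hid + Sf (nsq q) *\<^sub>R Xq q)) (hdiag v v)"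
    by (simp add: piB_def hexp_Xq)
  then show ?thesis by (simp add: Xq_def hid_def hdiag_def)
qed

lemma qcnj_eq_0[simp]: "qcnj p = 0 \<longleftrightarrow> p = 0"
  by (metis qcnj_qcnj qcnj_zero)

lemma Sp11_iff: "(a, b, c, d) \<in> Sp11 \<longleftrightarrow>
   nsq a - nsq c = 1 \<and> nsq d - nsq b = 1 \<and> qmul (qcnj a) b = qmul (qcnj c) d"
proof -
  have q1: "qmul (qcnj a) a - qmul (qcnj c) c = qone \<longleftrightarrow> nsq a - nsq c = 1"
    by (simp add: qmul_cnj_left qone_def zero_prod_def)
  have q2: "qmul (qcnj b) b - qmul (qcnj d) d = - qone \<longleftrightarrow> nsq d - nsq b = 1"
    by (auto simp add: qmul_cnj_left qone_def zero_prod_def)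
  have q3: "qmul (qcnj b) a = qmul (qcnj d) c \<longleftrightarrow> qmul (qcnj a) b = qmul (qcnj c) d"
    by (metis qcnj_qmul qcnj_qcnj)
  have "(a, b, c, d) \<in> Sp11 \<longleftrightarrow> (qmul (qcnj a) a - qmul (qcnj c) c = qone \<and>
      qmul (qcnj a) b = qmul (qcnj c) d \<and>
      qmul (qcnj b) a = qmul (qcnj d) c \<and>
      qmul (qcnj b) b - qmul (qcnj d) d = - qone)"
    unfolding Sp11_def by (simp add: I11_def)
  then show ?thesis using q1 q2 q3 by blast
qed



lemma qmul_cnj_left_assoc: "qmul (qcnj p) (qmul p r) = nsq p *\<^sub>R r"
  by (simp add: qmul_assoc[symmetric] qmul_cnj_left)
lemma qmul_cnj_right_assoc: "qmul p (qmul (qcnj p) r) = nsq p *\<^sub>R r"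
  by (simp add: qmul_assoc[symmetric] qmul_cnj_right)

lemma Sp1_nsq: "u \<in> Sp1 \<longleftrightarrow> nsq u = 1"
  unfolding Sp1_def using norm_quat[of u] nsq_nonneg[of u] by auto

definition Ginv :: "hmat \<Rightarrow> quat \<times> hmat \<times> quat" where
  "Ginv A = ((rs (nsq (snd (snd (snd A)))) * rs (nsq (snd (snd (snd A))))) *\<^sub>R qmul (fst A) (qcnj (snd (snd (snd A)))),
             Xq ((rs (nsq (snd (snd (snd A)))) * Kf (nsq (fst (snd (snd A))))) *\<^sub>R qmul (fst (snd (snd A))) (qcnj (snd (snd (snd A))))),
             rs (nsq (snd (snd (snd A)))) *\<^sub>R snd (snd (snd A)))"

lemma Ginv_simp: "Ginv (a, b, c, d) = ((rs (nsq d) * rs (nsq d)) *\<^sub>R qmul a (qcnj d),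
   Xq ((rs (nsq d) * Kf (nsq c)) *\<^sub>R qmul c (qcnj d)), rs (nsq d) *\<^sub>R d)"
  unfolding Ginv_def by simp

lemma rs_sq: "0 \<le> C \<Longrightarrow> rs (C * C) = inverse C"
  unfolding rs_def by simp

lemma Ginv_piB:
  assumes u: "u \<in> Sp1" and v: "v \<in> Sp1"
  shows "Ginv (piB (u, Xq q, v)) = (u, Xq q, v)"
proof -
  define y where "y = nsq q"
  define C where "C = Cf y"
  define S where "S = Sf y"
  have y: "0 \<le> y" unfolding y_def by (rule nsq_nonneg)
  have C: "1 \<le> C" unfolding C_def by (rule Cf_ge1[OF y])
  have S: "1 \<le> S" unfolding S_def by (rule Sf_ge1[OF y])
  have nu: "nsq u = 1" and nv: "nsq v = 1" using u v Sp1_nsq by auto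
  have vv: "qmul v (qcnj v) = qone" using qmul_cnj_right[of v] nv by simp
  have nd: "nsq (C *\<^sub>R v) = C * C" by (simp add: nsq_scaleR nv)
  have nc: "nsq (S *\<^sub>R qmul q v) = Phi y" by (simp add: nsq_scaleR nsq_qmul nv Phi_def y_def S_def algebra_simps)
  have f: "rs (C * C) = inverse C" using rs_sq C by simp
  have k: "Kf (Phi y) = inverse S" unfolding S_def by (rule Kf_Phi[OF y])
  have P: "piB (u, Xq q, v) = (C *\<^sub>R qmul u v, S *\<^sub>R qmul (qmul u (qcnj q)) v, S *\<^sub>R qmul q v, C *\<^sub>R v)"
    unfolding piB_Xq C_def S_def y_def ..
  have c1: "(inverse C * inverse C) *\<^sub>R qmul (C *\<^sub>R qmul u v) (qcnj (C *\<^sub>R v)) = u"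
  proof -
    have "(inverse C * inverse C) *\<^sub>R qmul (C *\<^sub>R qmul u v) (qcnj (C *\<^sub>R v)) = (inverse C * inverse C * (C * C)) *\<^sub>R u"
      by (simp add: qmul_assoc vv)
    also have "inverse C * inverse C * (C * C) = 1" using C by (simp add: field_simps)
    finally show ?thesis by simp
  qed
  have c2: "(inverse C * inverse S) *\<^sub>R qmul (S *\<^sub>R qmul q v) (qcnj (C *\<^sub>R v)) = q"
  proof -
    have "(inverse C * inverse S) *\<^sub>R qmul (S *\<^sub>R qmul q v) (qcnj (C *\<^sub>R v)) = (inverse C * inverse S * (S * C)) *\<^sub>R q"
      by (simp add: qmul_assoc vv)
    also have "inverse C * inverse S * (S * C) = 1" using C S by (simp add: field_simps)
    finally show ?thesis by simp
  qed
  have c3: "inverse C *\<^sub>R C *\<^sub>R v = v" using C by simp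
  show ?thesis unfolding P Ginv_simp nd nc f k c1 c2 c3 ..
qed

lemma Sp11_facts:
  assumes "(a, b, c, d) \<in> Sp11"
  shows "nsq a = nsq d" "nsq b = nsq c" "1 \<le> nsq d" "nsq d = 1 + nsq c"
    "b = inverse (nsq d) *\<^sub>R qmul a (qmul (qcnj c) d)"
proof -
  have h: "nsq a - nsq c = 1" "nsq d - nsq b = 1" "qmul (qcnj a) b = qmul (qcnj c) d"
    using assms Sp11_iff by auto
  have "nsq (qmul (qcnj a) b) = nsq (qmul (qcnj c) d)" using h(3) by simp
  then have e: "nsq a * nsq b = nsq c * nsq d" by (simp add: nsq_qmul)
  have a: "nsq a = 1 + nsq c" and d: "nsq d = 1 + nsq b" using h by auto
  have bc: "nsq b = nsq c" using e unfolding a d by (simp add: algebra_simps)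
  show "nsq b = nsq c" by (fact bc)
  show "nsq a = nsq d" using a d bc by simp
  show "1 \<le> nsq d" using d nsq_nonneg[of b] by simp
  show "nsq d = 1 + nsq c" using d bc by simp
  have "qmul a (qmul (qcnj a) b) = qmul a (qmul (qcnj c) d)" using h(3) by simp
  then have "nsq a *\<^sub>R b = qmul a (qmul (qcnj c) d)" by (simp add: qmul_cnj_right_assoc)
  then have "inverse (nsq a) *\<^sub>R (nsq a *\<^sub>R b) = inverse (nsq a) *\<^sub>R qmul a (qmul (qcnj c) d)" by simp
  moreover have "nsq a = nsq d" using a d bc by simp
  moreover have "nsq d \<noteq> 0" using d nsq_nonneg[of b] by simp
  ultimately show "b = inverse (nsq d) *\<^sub>R qmul a (qmul (qcnj c) d)" by simp
qed

lemma piB_Ginv: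
  assumes A: "(a, b, c, d) \<in> Sp11"
  shows "Ginv (a, b, c, d) \<in> Sp1 \<times> mB \<times> Sp1" "piB (Ginv (a, b, c, d)) = (a, b, c, d)"
proof -
  define n where "n = nsq d"
  define f where "f = rs n"
  define z where "z = nsq c"
  define w where "w = Psi z"
  define k where "k = Kf z"
  define u where "u = (f * f) *\<^sub>R qmul a (qcnj d)"
  define q where "q = (f * k) *\<^sub>R qmul c (qcnj d)"
  define v where "v = f *\<^sub>R d"
  have G: "Ginv (a, b, c, d) = (u, Xq q, v)"
    unfolding Ginv_simp u_def q_def v_def f_def k_def n_def z_def ..
  note F = Sp11_facts[OF A]
  have n1: "1 \<le> n" unfolding n_def using F by simp
  have z0: "0 \<le> z" unfolding z_def by (rule nsq_nonneg)
  have nz: "n = 1 + z" unfolding n_def z_def using F by simp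
  have fpos: "0 < f" unfolding f_def rs_def using n1 by simp
  have ffn: "f * f * n = 1" unfolding f_def rs_def using n1
    by (simp add: field_simps)
  have w0: "0 \<le> w" unfolding w_def by (rule Psi_nonneg[OF z0])
  have Pw: "Phi w = z" unfolding w_def by (rule Psi_W(1)[OF nonneg_W[OF z0]])
  have Sw: "1 \<le> Sf w" by (rule Sf_ge1[OF w0])
  have k: "k = inverse (Sf w)" unfolding k_def Kf_def w_def ..
  have Sk: "Sf w * k = 1" unfolding k using Sw by simp
  have nq: "nsq q = w"
  proof -
    have "nsq q = (f * k) * (f * k) * (z * n)" unfolding q_def z_def n_def by (simp add: nsq_scaleR nsq_qmul)
    also have "\<dots> = (f * f * n) * (k * k) * z" by (simp add: algebra_simps)
    also have "\<dots> = (k * k) * (w * (Sf w * Sf w))" using ffn Pw unfolding Phi_def by simp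
    also have "\<dots> = w * ((Sf w * k) * (Sf w * k))" by (simp add: algebra_simps)
    finally show ?thesis using Sk by simp
  qed
  have Cw: "Cf w ^ 2 = n" using Cf_Sf_id[OF w0] Pw nz unfolding Phi_def by simp
  have Cf1: "Cf w * f = 1"
  proof -
    have "Cf w = sqrt n" using Cw Cf_ge1[OF w0] by (metis abs_of_nonneg real_sqrt_abs zero_le_one order_trans)
    then show ?thesis unfolding f_def rs_def using n1 by simp
  qed
  have nv: "nsq v = 1" unfolding v_def using ffn by (simp add: nsq_scaleR n_def)
  have nu: "nsq u = 1"
  proof -
    have "nsq u = (f * f * n) * (f * f * n)" unfolding u_def n_def using F by (simp add: nsq_scaleR nsq_qmul)
    then show ?thesis using ffn by simp
  qed
  show "Ginv (a, b, c, d) \<in> Sp1 \<times> mB \<times> Sp1"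
  proof -
    have "u \<in> Sp1" "v \<in> Sp1" using nu nv Sp1_nsq by blast+
    moreover have "Xq q \<in> mB" using mB_Xq by blast
    ultimately show ?thesis unfolding G by blast
  qed
  have P: "piB (u, Xq q, v) = (Cf w *\<^sub>R qmul u v, Sf w *\<^sub>R qmul (qmul u (qcnj q)) v, Sf w *\<^sub>R qmul q v, Cf w *\<^sub>R v)"
    unfolding piB_Xq nq ..
  have c1: "Cf w *\<^sub>R qmul u v = a"
  proof -
    have "Cf w *\<^sub>R qmul u v = (Cf w * f * (f * f * n)) *\<^sub>R a"
      unfolding u_def v_def n_def by (simp add: qmul_assoc qmul_cnj_left mult_ac)
    then show ?thesis using Cf1 ffn by simp
  qed
  have c2: "Sf w *\<^sub>R qmul (qmul u (qcnj q)) v = b"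
  proof -
    have "Sf w *\<^sub>R qmul (qmul u (qcnj q)) v = ((Sf w * k) * (f * f * n) * (f * f)) *\<^sub>R qmul a (qmul (qcnj c) d)"
      unfolding u_def v_def q_def n_def by (simp add: qmul_assoc qcnj_qmul qmul_cnj_left_assoc mult_ac)
    also have "(Sf w * k) * (f * f * n) * (f * f) = inverse n" using Sk ffn n1 by (simp add: field_simps)
    finally show ?thesis using F(5) unfolding n_def by simp
  qed
  have c3: "Sf w *\<^sub>R qmul q v = c"
  proof -
    have "Sf w *\<^sub>R qmul q v = ((Sf w * k) * (f * f * n)) *\<^sub>R c"
      unfolding v_def q_def n_def by (simp add: qmul_assoc qmul_cnj_left mult_ac)
    then show ?thesis using Sk ffn by simp
  qed
  have c4: "Cf w *\<^sub>R v = d" unfolding v_def using Cf1 by simp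
  show "piB (Ginv (a, b, c, d)) = (a, b, c, d)" unfolding G P c1 c2 c3 c4 ..
qed

lemma piB_Sp11:
  assumes u: "u \<in> Sp1" and v: "v \<in> Sp1"
  shows "piB (u, Xq q, v) \<in> Sp11"
proof -
  define y where "y = nsq q"
  define C where "C = Cf y"
  define S where "S = Sf y"
  have y: "0 \<le> y" unfolding y_def by (rule nsq_nonneg)
  have nu: "nsq u = 1" and nv: "nsq v = 1" using u v Sp1_nsq by auto
  have id: "C * C = 1 + y * (S * S)" using Cf_Sf_id[OF y] unfolding C_def S_def by (simp add: power2_eq_square)
  have P: "piB (u, Xq q, v) = (C *\<^sub>R qmul u v, S *\<^sub>R qmul (qmul u (qcnj q)) v, S *\<^sub>R qmul q v, C *\<^sub>R v)"
    unfolding piB_Xq C_def S_def y_def ..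
  have e1: "nsq (C *\<^sub>R qmul u v) - nsq (S *\<^sub>R qmul q v) = 1"
    using id by (simp add: nsq_scaleR nsq_qmul nu nv y_def algebra_simps)
  have e2: "nsq (C *\<^sub>R v) - nsq (S *\<^sub>R qmul (qmul u (qcnj q)) v) = 1"
    using id by (simp add: nsq_scaleR nsq_qmul nu nv y_def algebra_simps)
  have e3: "qmul (qcnj (C *\<^sub>R qmul u v)) (S *\<^sub>R qmul (qmul u (qcnj q)) v) =
            qmul (qcnj (S *\<^sub>R qmul q v)) (C *\<^sub>R v)"
    by (simp add: qcnj_qmul qmul_assoc qmul_cnj_left_assoc nu mult.commute)
  show ?thesis unfolding P Sp11_iff using e1 e2 e3 by blast
qed



lemma hmul_add_left: "hmul (A + A') B = hmul A B + hmul A' B"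
  by (cases A rule: prod_cases4; cases A' rule: prod_cases4; cases B rule: prod_cases4)
     (simp add: qmul_add_left)
lemma hmul_add_right: "hmul A (B + B') = hmul A B + hmul A B'"
  by (cases A rule: prod_cases4; cases B' rule: prod_cases4; cases B rule: prod_cases4)
     (simp add: qmul_add_right)
lemma hmul_scaleR_left: "hmul (c *\<^sub>R A) B = c *\<^sub>R hmul A B"
  by (cases A rule: prod_cases4; cases B rule: prod_cases4) (simp add: scaleR_right_distrib)

lemma bounded_bilinear_hmul: "bounded_bilinear hmul"
proof -
  have l1: "linear (hmul x)" for x
    by (rule linearI) (simp_all add: hmul_add_right hmul_scaleR_right)
  have l2: "linear (\<lambda>x. hmul x y)" for y
    by (rule linearI) (simp_all add: hmul_add_left hmul_scaleR_left)
  have "bilinear hmul"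
    unfolding bilinear_def using l1 l2 by blast
  then show ?thesis using bilinear_conv_bounded_bilinear by blast
qed

lemma nsq_inner: "nsq p = inner p p"
  by (cases p rule: prod_cases4) simp

lemma sm_fst: "open U \<Longrightarrow> smooth U f \<Longrightarrow> smooth U (\<lambda>x. fst (f x))"
  using smooth_linear[OF _ bounded_linear_fst] by blast
lemma sm_snd: "open U \<Longrightarrow> smooth U f \<Longrightarrow> smooth U (\<lambda>x. snd (f x))"
  using smooth_linear[OF _ bounded_linear_snd] by blast
lemma sm_qmul: "open U \<Longrightarrow> smooth U f \<Longrightarrow> smooth U g \<Longrightarrow> smooth U (\<lambda>x. qmul (f x) (g x))"
  using smooth_bilinear[OF _ bounded_bilinear_qmul] by blast
lemma sm_hmul: "open U \<Longrightarrow> smooth U f \<Longrightarrow> smooth U g \<Longrightarrow> smooth U (\<lambda>x. hmul (f x) (g x))"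
  using smooth_bilinear[OF _ bounded_bilinear_hmul] by blast
lemma sm_qcnj: "open U \<Longrightarrow> smooth U f \<Longrightarrow> smooth U (\<lambda>x. qcnj (f x))"
  using smooth_linear[OF _ bounded_linear_qcnj] by blast
lemma sm_nsq: "open U \<Longrightarrow> smooth U f \<Longrightarrow> smooth U (\<lambda>x. nsq (f x))"
  unfolding nsq_inner using smooth_bilinear[OF _ bounded_bilinear_inner] by blast
lemma sm_Xq: "open U \<Longrightarrow> smooth U f \<Longrightarrow> smooth U (\<lambda>x. Xq (f x))"
  unfolding Xq_def by (intro smooth_Pair sm_qcnj smooth_const)
lemma sm_hdiag: "open U \<Longrightarrow> smooth U f \<Longrightarrow> smooth U g \<Longrightarrow> smooth U (\<lambda>x. hdiag (f x) (g x))"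
  unfolding hdiag_def by (intro smooth_Pair smooth_const)

definition Eext :: "hmat \<Rightarrow> hmat" where
  "Eext X = Cf (nsq (fst (snd (snd X)))) *\<^sub>R hid + Sf (nsq (fst (snd (snd X)))) *\<^sub>R X"

definition Fext :: "quat \<times> hmat \<times> quat \<Rightarrow> hmat" where
  "Fext p = hmul (hmul (hdiag (fst p) qone) (Eext (fst (snd p)))) (hdiag (snd (snd p)) (snd (snd p)))"

lemma Fext_piB: "Fext (u, Xq q, v) = piB (u, Xq q, v)"
proof -
  have "fst (snd (snd (Xq q))) = q" by (simp add: Xq_def)
  then show ?thesis unfolding Fext_def piB_def Eext_def by (simp add: hexp_Xq)
qed

lemma smooth_Eext: "smooth UNIV Eext"
proof -
  have n: "smooth UNIV (\<lambda>X::hmat. nsq (fst (snd (snd X))))"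
    by (intro sm_nsq sm_fst sm_snd smooth_id open_UNIV)
  have c: "smooth UNIV (\<lambda>X::hmat. Cf (nsq (fst (snd (snd X)))))"
    by (rule smooth_compose[OF open_UNIV open_UNIV _ n smooth_Cf]) simp
  have s: "smooth UNIV (\<lambda>X::hmat. Sf (nsq (fst (snd (snd X)))))"
    by (rule smooth_compose[OF open_UNIV open_UNIV _ n smooth_Sf]) simp
  show ?thesis unfolding Eext_def[abs_def]
    by (intro smooth_add smooth_scaleR c s smooth_const smooth_id open_UNIV)
qed

lemma smooth_Fext: "smooth UNIV Fext"
proof -
  have e: "smooth UNIV (\<lambda>p::quat \<times> hmat \<times> quat. Eext (fst (snd p)))"
    by (rule smooth_compose[OF open_UNIV open_UNIV _ _ smooth_Eext]) (auto intro!: sm_fst sm_snd smooth_id)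
  show ?thesis unfolding Fext_def[abs_def]
    by (intro sm_hmul sm_hdiag e sm_fst sm_snd smooth_id smooth_const open_UNIV)
qed



definition U0 :: "hmat set" where
  "U0 = {A. 0 < nsq (snd (snd (snd A)))} \<inter> {A. Phi (-eps/2) < nsq (fst (snd (snd A)))}"

lemma smooth_nd: "smooth UNIV (\<lambda>A::hmat. nsq (snd (snd (snd A))))"
  by (intro sm_nsq sm_snd smooth_id open_UNIV)
lemma smooth_nc: "smooth UNIV (\<lambda>A::hmat. nsq (fst (snd (snd A))))"
  by (intro sm_nsq sm_fst sm_snd smooth_id open_UNIV)

lemma open_U0: "open U0"
  unfolding U0_def
  by (intro open_Int open_Collect_less smooth_cont[OF smooth_nd] smooth_cont[OF smooth_nc] continuous_on_const)

lemma Sp11_U0: "Sp11 \<subseteq> U0"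
proof
  fix A assume A: "A \<in> Sp11"
  obtain a b c d where Ad: "A = (a, b, c, d)" by (cases A rule: prod_cases4)
  have "1 \<le> nsq d" using Sp11_facts[of a b c d] A Ad by simp
  moreover have "nsq c \<in> W" by (rule nonneg_W[OF nsq_nonneg])
  ultimately show "A \<in> U0" unfolding U0_def Ad W_def by simp
qed

lemma smooth_Ginv: "smooth U0 Ginv"
proof -
  have oU: "open U0" by (rule open_U0)
  have r: "smooth U0 (\<lambda>A::hmat. rs (nsq (snd (snd (snd A)))))"
  proof (rule smooth_compose[OF oU _ _ _ smooth_rs])
    show "open {t::real. 0 < t}" by (simp add: open_Collect_less)
    show "(\<lambda>A. nsq (snd (snd (snd A)))) ` U0 \<subseteq> {t. 0 < t}" unfolding U0_def by auto
    show "smooth U0 (\<lambda>A::hmat. nsq (snd (snd (snd A))))" using smooth_subset[OF smooth_nd] by blast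
  qed
  have k: "smooth U0 (\<lambda>A::hmat. Kf (nsq (fst (snd (snd A)))))"
  proof (rule smooth_compose[OF oU open_W _ _ smooth_Kf])
    show "(\<lambda>A. nsq (fst (snd (snd A)))) ` U0 \<subseteq> W" unfolding U0_def W_def by auto
    show "smooth U0 (\<lambda>A::hmat. nsq (fst (snd (snd A))))" using smooth_subset[OF smooth_nc] by blast
  qed
  show ?thesis unfolding Ginv_def[abs_def]
    by (intro smooth_Pair smooth_scaleR smooth_mult sm_qmul sm_qcnj sm_Xq r k sm_fst sm_snd smooth_id oU)
qed

theorem theorem3p14:
  shows "diffeomorphism_betw piB (Sp1 \<times> mB \<times> Sp1) Sp11"
proof -
  let ?S = "Sp1 \<times> mB \<times> Sp1"
  have Sform: "p \<in> ?S \<longleftrightarrow> (\<exists>u q v. p = (u, Xq q, v) \<and> u \<in> Sp1 \<and> v \<in> Sp1)" for p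
  proof
    assume "p \<in> ?S"
    then have h: "fst p \<in> Sp1" "fst (snd p) \<in> mB" "snd (snd p) \<in> Sp1" by (auto simp: mem_Times_iff)
    then obtain q where "fst (snd p) = Xq q" using mB_Xq by blast
    then have "p = (fst p, Xq q, snd (snd p))" by (metis prod.collapse)
    then show "\<exists>u q v. p = (u, Xq q, v) \<and> u \<in> Sp1 \<and> v \<in> Sp1" using h by blast
  next
    assume "\<exists>u q v. p = (u, Xq q, v) \<and> u \<in> Sp1 \<and> v \<in> Sp1"
    then obtain u q v where "p = (u, Xq q, v)" "u \<in> Sp1" "v \<in> Sp1" by blast
    moreover have "Xq q \<in> mB" using mB_Xq by blast
    ultimately show "p \<in> ?S" by simp
  qed
  have linv: "Ginv (piB p) = p" if P: "p \<in> ?S" for p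
  proof -
    obtain u q v where "p = (u, Xq q, v)" "u \<in> Sp1" "v \<in> Sp1" using P Sform by blast
    then show ?thesis using Ginv_piB by simp
  qed
  have Fp: "Fext p = piB p" if P: "p \<in> ?S" for p
  proof -
    obtain u q v where "p = (u, Xq q, v)" "u \<in> Sp1" "v \<in> Sp1" using P Sform by blast
    then show ?thesis using Fext_piB by simp
  qed
  have inj: "inj_on piB ?S"
    by (rule inj_on_inverseI[where g=Ginv]) (rule linv)
  have img1: "piB ` ?S \<subseteq> Sp11"
  proof
    fix A assume "A \<in> piB ` ?S"
    then obtain p where p: "p \<in> ?S" "A = piB p" by blast
    obtain u q v where "p = (u, Xq q, v)" "u \<in> Sp1" "v \<in> Sp1" using p(1) Sform by blast
    then show "A \<in> Sp11" using piB_Sp11 p(2) by simp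
  qed
  have rinv: "Ginv A \<in> ?S \<and> piB (Ginv A) = A" if "A \<in> Sp11" for A
  proof -
    obtain a b c d where Ad: "A = (a, b, c, d)" by (cases A rule: prod_cases4)
    show ?thesis using piB_Ginv[of a b c d] that Ad by simp
  qed
  have img2: "Sp11 \<subseteq> piB ` ?S"
    using rinv by (metis image_eqI subsetI)
  have bij: "bij_betw piB ?S Sp11"
    unfolding bij_betw_def using inj img1 img2 by blast
  have sm1: "smooth_map_on ?S piB"
    unfolding smooth_map_on_def
  proof
    fix x assume x: "x \<in> ?S"
    show "\<exists>U g. open U \<and> x \<in> U \<and> smooth_on U g \<and> (\<forall>y\<in>?S \<inter> U. g y = piB y)"
    proof (intro exI conjI)
      show "open (UNIV :: (quat \<times> hmat \<times> quat) set)" by simp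
      show "x \<in> UNIV" by simp
      show "smooth_on UNIV Fext" using smooth_Fext unfolding smooth_on_def smooth_def by simp
      show "\<forall>y\<in>?S \<inter> UNIV. Fext y = piB y" using Fp by blast
    qed
  qed
  have sm2: "smooth_map_on Sp11 (inv_into ?S piB)"
    unfolding smooth_map_on_def
  proof
    fix x assume x: "x \<in> Sp11"
    show "\<exists>U g. open U \<and> x \<in> U \<and> smooth_on U g \<and> (\<forall>y\<in>Sp11 \<inter> U. g y = inv_into ?S piB y)"
    proof (intro exI conjI)
      show "open U0" by (rule open_U0)
      show "x \<in> U0" using x Sp11_U0 by blast
      show "smooth_on U0 Ginv" using smooth_Ginv open_U0 unfolding smooth_on_def smooth_def by simp
      show "\<forall>y\<in>Sp11 \<inter> U0. Ginv y = inv_into ?S piB y"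
      proof
        fix y assume "y \<in> Sp11 \<inter> U0"
        then have "Ginv y \<in> ?S" "piB (Ginv y) = y" using rinv by auto
        then show "Ginv y = inv_into ?S piB y" using inv_into_f_eq[OF inj] by metis
      qed
    qed
  qed
  show ?thesis unfolding diffeomorphism_betw_def using bij sm1 sm2 by blast
qed


end
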